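(* Let $R$ be an irreducible reduced finite root system with root lattice $X=\mathbb{Z}R$ and $\check X=\operatorname{Hom}(X,\mathbb{Z})$. An automorphism $\sigma\in\operatorname{Aut}(R)$ preserves some base of $R$ if and only if no root $\alpha\in R$ vanishes identically on the fixed-point sublattice $\check X^\sigma=\{\check v\in\check X:\sigma\check v=\check v\}$.
   Context: $\operatorname{Aut}(R)$ denotes the group of linear automorphisms of $\mathbb{R}\otimes X$ preserving $R$, acting on $\check X$ by duality. *)

theory Defs
  imports "HOL-Analysis.Analysis"
begin

text \<open>Finite root systems in the (Bourbaki) abstract sense, in a finite-dimensional
real vector space V, modelled by a type of class euclidean_space (the inner product
is not used).\<close>

definition root_system :: "'a::euclidean_space set \<Rightarrow> bool" where
  "root_system R \<longleftrightarrow>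
     finite R \<and> 0 \<notin> R \<and> span R = UNIV \<and>
     (\<forall>\<alpha>\<in>R. \<exists>c :: 'a \<Rightarrow> real. linear c \<and> c \<alpha> = 2 \<and>
        (\<forall>\<beta>\<in>R. \<beta> - c \<beta> *\<^sub>R \<alpha> \<in> R) \<and>
        (\<forall>\<beta>\<in>R. c \<beta> \<in> \<int>))"

definition reduced_root_system :: "'a::euclidean_space set \<Rightarrow> bool" where
  "reduced_root_system R \<longleftrightarrow> root_system R \<and>
     (\<forall>\<alpha>\<in>R. \<forall>t::real. t *\<^sub>R \<alpha> \<in> R \<longrightarrow> t = 1 \<or> t = -1)"

definition irreducible_root_system :: "'a::euclidean_space set \<Rightarrow> bool" where
  "irreducible_root_system R \<longleftrightarrow> root_system R \<and> R \<noteq> {} \<and>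
     \<not> (\<exists>V1 V2. subspace V1 \<and> subspace V2 \<and> V1 \<noteq> {0} \<and> V2 \<noteq> {0} \<and>
           V1 \<inter> V2 = {0} \<and> {x + y | x y. x \<in> V1 \<and> y \<in> V2} = UNIV \<and>
           R \<subseteq> V1 \<union> V2)"

definition root_lattice :: "'a::euclidean_space set \<Rightarrow> 'a set" where
  "root_lattice R = {\<Sum>\<alpha>\<in>R. of_int (c \<alpha>) *\<^sub>R \<alpha> | c :: 'a \<Rightarrow> int. True}"

text \<open>Coweight lattice Hom(X, \<int>): group homomorphisms X \<rightarrow> \<int>, represented
extensionally (value 0 outside X).\<close>
definition dual_lattice :: "'a::euclidean_space set \<Rightarrow> ('a \<Rightarrow> int) set" where
  "dual_lattice R = {f. (\<forall>x\<in>root_lattice R. \<forall>y\<in>root_lattice R. f (x + y) = f x + f y) \<and>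
                        (\<forall>x. x \<notin> root_lattice R \<longrightarrow> f x = 0)}"

definition root_aut :: "'a::euclidean_space set \<Rightarrow> ('a \<Rightarrow> 'a) \<Rightarrow> bool" where
  "root_aut R \<sigma> \<longleftrightarrow> linear \<sigma> \<and> bij \<sigma> \<and> \<sigma> ` R = R"

text \<open>Action of \<sigma> on the dual lattice by duality: (\<sigma> f)(x) = f(\<sigma>^{-1} x);
fixed-point sublattice.\<close>
definition fixed_dual_lattice :: "'a::euclidean_space set \<Rightarrow> ('a \<Rightarrow> 'a) \<Rightarrow> ('a \<Rightarrow> int) set" where
  "fixed_dual_lattice R \<sigma> = {f \<in> dual_lattice R. \<forall>x\<in>root_lattice R. f (inv \<sigma> x) = f x}"

definition is_base :: "'a::euclidean_space set \<Rightarrow> 'a set \<Rightarrow> bool" where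
  "is_base R \<Delta> \<longleftrightarrow> \<Delta> \<subseteq> R \<and> independent \<Delta> \<and>
     (\<forall>\<beta>\<in>R. \<exists>c :: 'a \<Rightarrow> int. \<beta> = (\<Sum>\<delta>\<in>\<Delta>. of_int (c \<delta>) *\<^sub>R \<delta>) \<and>
        ((\<forall>\<delta>\<in>\<Delta>. c \<delta> \<ge> 0) \<or> (\<forall>\<delta>\<in>\<Delta>. c \<delta> \<le> 0)))"

end

theory Submission
  imports Defs "Jordan_Normal_Form.Determinant"
begin

locale rootsys =
  fixes R :: "'a::euclidean_space set"
  assumes rs: "root_system R"
begin

lemma finR: "finite R" and zR: "0 \<notin> R" and spR: "span R = UNIV"
  using rs unfolding root_system_def by auto

definition cor :: "'a \<Rightarrow> 'a \<Rightarrow> real" where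
  "cor \<alpha> = (SOME c. linear c \<and> c \<alpha> = 2 \<and> (\<forall>\<beta>\<in>R. \<beta> - c \<beta> *\<^sub>R \<alpha> \<in> R) \<and> (\<forall>\<beta>\<in>R. c \<beta> \<in> \<int>))"

lemma cor: assumes "\<alpha> \<in> R"
  shows "linear (cor \<alpha>)" "cor \<alpha> \<alpha> = 2" "\<And>\<beta>. \<beta> \<in> R \<Longrightarrow> \<beta> - cor \<alpha> \<beta> *\<^sub>R \<alpha> \<in> R"
    "\<And>\<beta>. \<beta> \<in> R \<Longrightarrow> cor \<alpha> \<beta> \<in> \<int>"
proof -
  have "\<exists>c. linear c \<and> c \<alpha> = 2 \<and> (\<forall>\<beta>\<in>R. \<beta> - c \<beta> *\<^sub>R \<alpha> \<in> R) \<and> (\<forall>\<beta>\<in>R. c \<beta> \<in> \<int>)"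
    using rs assms unfolding root_system_def by blast
  from someI_ex[OF this] show "linear (cor \<alpha>)" "cor \<alpha> \<alpha> = 2" "\<And>\<beta>. \<beta> \<in> R \<Longrightarrow> \<beta> - cor \<alpha> \<beta> *\<^sub>R \<alpha> \<in> R"
    "\<And>\<beta>. \<beta> \<in> R \<Longrightarrow> cor \<alpha> \<beta> \<in> \<int>" unfolding cor_def by blast+
qed

definition refl :: "'a \<Rightarrow> 'a \<Rightarrow> 'a" where "refl \<alpha> x = x - cor \<alpha> x *\<^sub>R \<alpha>"

lemma refl_lin: "\<alpha> \<in> R \<Longrightarrow> linear (refl \<alpha>)"
  unfolding refl_def using linear_add[OF cor(1)] linear_scale[OF cor(1)]
  by (intro linearI) (auto simp: algebra_simps)

lemma refl_R: "\<alpha> \<in> R \<Longrightarrow> \<beta> \<in> R \<Longrightarrow> refl \<alpha> \<beta> \<in> R"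
  unfolding refl_def using cor(3) by blast

lemma refl_refl: assumes "\<alpha> \<in> R" shows "refl \<alpha> (refl \<alpha> x) = x"
proof -
  have l: "linear (cor \<alpha>)" using cor(1)[OF assms] .
  have "cor \<alpha> (refl \<alpha> x) = cor \<alpha> x - cor \<alpha> x * 2"
    unfolding refl_def using linear_diff[OF l] linear_scale[OF l] cor(2)[OF assms] by simp
  thus ?thesis unfolding refl_def[of \<alpha> "refl \<alpha> x"] by (simp add: refl_def algebra_simps scaleR_2)
qed

lemma refl_self: "\<alpha> \<in> R \<Longrightarrow> refl \<alpha> \<alpha> = - \<alpha>"
  unfolding refl_def using cor(2) by (simp add: scaleR_2)

lemma neg_R: "\<alpha> \<in> R \<Longrightarrow> - \<alpha> \<in> R"
  using refl_R refl_self by metis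

lemma refl_img: assumes "\<alpha> \<in> R" shows "refl \<alpha> ` R = R"
proof
  show "refl \<alpha> ` R \<subseteq> R" using refl_R assms by auto
  show "R \<subseteq> refl \<alpha> ` R"
  proof
    fix \<beta> assume "\<beta> \<in> R"
    then show "\<beta> \<in> refl \<alpha> ` R" using refl_refl[OF assms, of \<beta>] refl_R[OF assms] by (metis image_eqI)
  qed
qed

definition Gs :: "('a \<Rightarrow> 'a) set" where "Gs = {g. linear g \<and> g ` R = R}"

lemma lin_eq_R: "linear g \<Longrightarrow> linear h \<Longrightarrow> (\<And>x. x \<in> R \<Longrightarrow> g x = h x) \<Longrightarrow> g = h"
  using linear_eq_on_span[of g h R] spR by auto

lemma surj_Gs: assumes "g \<in> Gs" shows "surj g"
proof -
  have "range g \<supseteq> g ` span R" by auto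
  moreover have "g ` span R = span (g ` R)" using assms span_linear_image[of g R] unfolding Gs_def by auto
  ultimately show ?thesis using assms spR unfolding Gs_def by auto
qed

lemma finite_Gs: "finite Gs"
proof -
  have "inj_on (\<lambda>g. restrict g R) Gs"
  proof
    fix g h assume "g \<in> Gs" "h \<in> Gs" "restrict g R = restrict h R"
    then show "g = h" using lin_eq_R[of g h] unfolding Gs_def by (metis restrict_apply' mem_Collect_eq)
  qed
  moreover have "(\<lambda>g. restrict g R) ` Gs \<subseteq> R \<rightarrow>\<^sub>E R" unfolding Gs_def by auto
  moreover have "finite (R \<rightarrow>\<^sub>E R)" using finR by (intro finite_PiE) auto
  ultimately show ?thesis using finite_imageD finite_subset by metis
qed

lemma id_Gs: "id \<in> Gs" unfolding Gs_def by (auto simp: linear_id)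

lemma refl_Gs: "\<alpha> \<in> R \<Longrightarrow> refl \<alpha> \<in> Gs" unfolding Gs_def using refl_lin refl_img by auto

definition B :: "'a \<Rightarrow> 'a \<Rightarrow> real" where "B x y = (\<Sum>g\<in>Gs. inner (g x) (g y))"

lemma B_sym: "B x y = B y x" unfolding B_def by (simp add: inner_commute)

lemma B_lin: "linear (\<lambda>x. B x y)"
proof -
  have "linear (\<lambda>x. inner (g x) (g y))" if "g \<in> Gs" for g
    using that unfolding Gs_def
    by (auto intro!: linearI simp: linear_add linear_scale inner_add_left)
  then show ?thesis unfolding B_def by (intro linear_compose_sum) auto
qed

lemma B_add: "B (x + x') y = B x y + B x' y" using linear_add[OF B_lin] by blast
lemma B_scale: "B (a *\<^sub>R x) y = a * B x y" using linear_scale[OF B_lin] by auto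
lemma B_diff: "B (x - x') y = B x y - B x' y" using linear_diff[OF B_lin] by blast
lemma B_neg: "B (- x) y = - B x y" using linear_neg[OF B_lin] by blast
lemma B_add2: "B y (x + x') = B y x + B y x'" using B_add B_sym by metis
lemma B_scale2: "B y (a *\<^sub>R x) = a * B y x" using B_scale B_sym by metis
lemma B_diff2: "B y (x - x') = B y x - B y x'" using B_diff B_sym by metis
lemma B_neg2: "B y (- x) = - B y x" using B_neg B_sym by metis

lemma B_ge: "B x x \<ge> inner x x"
proof -
  have "inner (id x) (id x) \<le> (\<Sum>g\<in>Gs. inner (g x) (g x))"
    by (rule member_le_sum[OF id_Gs _ finite_Gs]) simp
  then show ?thesis unfolding B_def by simp
qed

lemma B_pos: "x \<noteq> 0 \<Longrightarrow> B x x > 0"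
  using B_ge[of x] by (metis inner_gt_zero_iff less_le_trans)

lemma B_0: "B 0 y = 0" using linear_0[OF B_lin] by simp

lemma B_zero: "B x x = 0 \<longleftrightarrow> x = 0"
  using B_pos[of x] B_0 by force

lemma B_inv: assumes "h \<in> Gs" shows "B (h x) (h y) = B x y"
proof -
  have inj: "inj_on (\<lambda>g. g \<circ> h) Gs"
  proof
    fix g g' assume "g \<in> Gs" "g' \<in> Gs" and e: "g \<circ> h = g' \<circ> h"
    show "g = g'"
    proof
      fix y
      obtain z where "y = h z" using surj_Gs[OF assms] by (metis surjD)
      then show "g y = g' y" using e by (metis comp_apply)
    qed
  qed
  have sub: "(\<lambda>g. g \<circ> h) ` Gs \<subseteq> Gs"
  proof
    fix k assume "k \<in> (\<lambda>g. g \<circ> h) ` Gs"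
    then obtain g where g: "g \<in> Gs" and k: "k = g \<circ> h" by blast
    have "linear k" unfolding k using g assms unfolding Gs_def by (auto intro: linear_compose)
    moreover have "k ` R = R" unfolding k image_comp[symmetric] using g assms unfolding Gs_def by simp
    ultimately show "k \<in> Gs" unfolding Gs_def by simp
  qed
  have eq: "(\<lambda>g. g \<circ> h) ` Gs = Gs" using endo_inj_surj[OF finite_Gs sub inj] .
  have "B x y = (\<Sum>g\<in>(\<lambda>g. g \<circ> h) ` Gs. inner (g x) (g y))" unfolding eq B_def ..
  also have "\<dots> = (\<Sum>g\<in>Gs. inner ((g \<circ> h) x) ((g \<circ> h) y))" using sum.reindex[OF inj, of "\<lambda>g. inner (g x) (g y)"] by (simp add: comp_def)
  finally show ?thesis unfolding B_def by simp
qed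

lemma cor_B: assumes "\<alpha> \<in> R" shows "B \<alpha> \<alpha> * cor \<alpha> x = 2 * B \<alpha> x"
proof -
  have "B \<alpha> x = B (refl \<alpha> \<alpha>) (refl \<alpha> x)" using B_inv[OF refl_Gs[OF assms]] by simp
  also have "\<dots> = - B \<alpha> x + cor \<alpha> x * B \<alpha> \<alpha>"
    unfolding refl_self[OF assms] refl_def[of \<alpha> x] by (simp add: B_neg B_diff2 B_scale2)
  finally show ?thesis by (simp add: algebra_simps)
qed

lemma B_span0: assumes "S \<subseteq> R" "span S = UNIV" "\<And>\<beta>. \<beta> \<in> S \<Longrightarrow> cor \<beta> w = 0" shows "w = 0"
proof -
  have "B \<beta> w = 0" if "\<beta> \<in> S" for \<beta>
  proof -
    have "\<beta> \<noteq> 0" using that assms(1) zR by auto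
    then have "B \<beta> \<beta> > 0" by (rule B_pos)
    then show ?thesis using cor_B[of \<beta> w] assms that by auto
  qed
  then have "B x w = 0" for x
    using linear_eq_on_span[where B=S and x=x, OF B_lin linear_zero] assms(2) by auto
  then show ?thesis using B_zero by auto
qed

end

context rootsys begin

lemma B_sum: "finite S \<Longrightarrow> B (\<Sum>i\<in>S. a i *\<^sub>R f i) w = (\<Sum>i\<in>S. a i * B (f i) w)"
  by (induction S rule: finite_induct) (auto simp: B_0 B_add B_scale)

lemma B_sum2: "finite S \<Longrightarrow> B w (\<Sum>i\<in>S. a i *\<^sub>R f i) = (\<Sum>i\<in>S. a i * B w (f i))"
  using B_sum B_sym by (metis (no_types, lifting) sum.cong)

lemma B_CS: assumes "x \<noteq> 0" "\<And>t. y \<noteq> t *\<^sub>R x" shows "(B x y)^2 < B x x * B y y"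
proof -
  define t where "t = B x y / B x x"
  have px: "B x x > 0" using B_pos[OF assms(1)] .
  have "y - t *\<^sub>R x \<noteq> 0" using assms(2)[of t] by auto
  then have pos: "B (y - t *\<^sub>R x) (y - t *\<^sub>R x) > 0" by (rule B_pos)
  have "B (y - t *\<^sub>R x) (y - t *\<^sub>R x) = B y y - 2 * t * B x y + t^2 * B x x"
    by (simp add: B_diff B_diff2 B_scale B_scale2 B_sym[of y x] power2_eq_square algebra_simps)
  also have "\<dots> = B y y - (B x y)^2 / B x x" unfolding t_def using px
    by (simp add: field_simps power2_eq_square)
  finally have "(B x y)^2 / B x x < B y y" using pos by simp
  then show ?thesis using px by (simp add: field_simps mult.commute)
qed

end

locale posys = rootsys +
  fixes \<phi> :: "'a \<Rightarrow> real"
  assumes red: "\<And>\<alpha> t. \<alpha> \<in> R \<Longrightarrow> t *\<^sub>R \<alpha> \<in> R \<Longrightarrow> t = 1 \<or> t = -1"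
    and phi_lin: "linear \<phi>"
    and phi_reg: "\<And>\<alpha>. \<alpha> \<in> R \<Longrightarrow> \<phi> \<alpha> \<noteq> 0"
begin

definition "Pos = {\<alpha>\<in>R. \<phi> \<alpha> > 0}"
definition "Dec \<alpha> \<longleftrightarrow> (\<exists>\<beta> \<gamma>. \<beta> \<in> Pos \<and> \<gamma> \<in> Pos \<and> \<alpha> = \<beta> + \<gamma>)"
definition "Del = {\<alpha>\<in>Pos. \<not> Dec \<alpha>}"

lemma finDel: "finite Del" unfolding Del_def Pos_def using finR by auto
lemma DelR: "Del \<subseteq> R" unfolding Del_def Pos_def by auto

lemma phi_add: "\<phi> (x + y) = \<phi> x + \<phi> y" using linear_add[OF phi_lin] .
lemma phi_neg: "\<phi> (- x) = - \<phi> x" using linear_neg[OF phi_lin] .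
lemma phi_diff: "\<phi> (x - y) = \<phi> x - \<phi> y" using linear_diff[OF phi_lin] .

lemma pos_comb: "\<alpha> \<in> Pos \<Longrightarrow> \<exists>k::'a\<Rightarrow>int. (\<forall>\<delta>\<in>Del. k \<delta> \<ge> 0) \<and> \<alpha> = (\<Sum>\<delta>\<in>Del. of_int (k \<delta>) *\<^sub>R \<delta>)"
proof (induction \<alpha> rule: measure_induct_rule[of "\<lambda>\<alpha>. card {\<gamma>\<in>R. \<phi> \<gamma> < \<phi> \<alpha>}"])
  case (less \<alpha>)
  show ?case
  proof (cases "Dec \<alpha>")
    case False
    then have aD: "\<alpha> \<in> Del" using less.prems unfolding Del_def by auto
    define k where "k = (\<lambda>\<delta>. if \<delta> = \<alpha> then 1 else 0::int)"
    have "(\<Sum>\<delta>\<in>Del. of_int (k \<delta>) *\<^sub>R \<delta>) = (\<Sum>\<delta>\<in>Del. if \<delta> = \<alpha> then \<delta> else 0)"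
      unfolding k_def by (intro sum.cong) auto
    also have "\<dots> = \<alpha>" using aD finDel by simp
    finally show ?thesis by (intro exI[of _ k]) (auto simp: k_def)
  next
    case True
    then obtain \<beta> \<gamma> where b: "\<beta> \<in> Pos" and g: "\<gamma> \<in> Pos" and a: "\<alpha> = \<beta> + \<gamma>" unfolding Dec_def by auto
    have lt: "card {\<gamma>'\<in>R. \<phi> \<gamma>' < \<phi> x} < card {\<gamma>'\<in>R. \<phi> \<gamma>' < \<phi> \<alpha>}"
      if "x \<in> Pos" "y \<in> Pos" "\<alpha> = x + y" for x y
    proof (rule psubset_card_mono)
      show "finite {\<gamma>'\<in>R. \<phi> \<gamma>' < \<phi> \<alpha>}" using finR by auto
      have "\<phi> x < \<phi> \<alpha>" using that phi_add unfolding Pos_def by auto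
      then show "{\<gamma>'\<in>R. \<phi> \<gamma>' < \<phi> x} \<subset> {\<gamma>'\<in>R. \<phi> \<gamma>' < \<phi> \<alpha>}"
        using that(1) unfolding Pos_def by auto
    qed
    obtain kb where kb: "\<forall>\<delta>\<in>Del. kb \<delta> \<ge> 0" "\<beta> = (\<Sum>\<delta>\<in>Del. of_int (kb \<delta>) *\<^sub>R \<delta>)"
      using less.IH[OF lt[OF b g a] b] by auto
    obtain kg where kg: "\<forall>\<delta>\<in>Del. kg \<delta> \<ge> 0" "\<gamma> = (\<Sum>\<delta>\<in>Del. of_int (kg \<delta>) *\<^sub>R \<delta>)"
      using less.IH[OF lt[OF g b] g] a by (auto simp: add.commute)
    show ?thesis
      by (intro exI[of _ "\<lambda>\<delta>. kb \<delta> + kg \<delta>"])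
        (use kb kg a in \<open>auto simp: scaleR_add_left sum.distrib\<close>)
  qed
qed

lemma R_split: "\<alpha> \<in> R \<Longrightarrow> \<alpha> \<in> Pos \<or> - \<alpha> \<in> Pos"
  using phi_reg[of \<alpha>] neg_R[of \<alpha>] phi_neg[of \<alpha>] unfolding Pos_def by auto

lemma diff_not_root: assumes "\<delta> \<in> Del" "\<delta>' \<in> Del" "\<delta>' - \<delta> \<in> R" shows False
proof (cases "\<phi> (\<delta>' - \<delta>) > 0")
  case True
  then have "Dec \<delta>'" using assms unfolding Dec_def Del_def Pos_def by (intro exI[of _ \<delta>] exI[of _ "\<delta>' - \<delta>"]) auto
  then show False using assms unfolding Del_def by auto
next
  case False
  then have "\<phi> (\<delta> - \<delta>') > 0" using phi_reg[OF assms(3)] phi_diff by auto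
  moreover have "\<delta> - \<delta>' \<in> R" using neg_R[OF assms(3)] by simp
  ultimately have "Dec \<delta>" using assms unfolding Dec_def Del_def Pos_def by (intro exI[of _ \<delta>'] exI[of _ "\<delta> - \<delta>'"]) auto
  then show False using assms unfolding Del_def by auto
qed

lemma int_prod: fixes a b :: int assumes "a > 0" "b > 0" "a * b < 4" shows "a = 1 \<or> b = 1"
proof (rule ccontr)
  assume "\<not> ?thesis"
  then have "a \<ge> 2" "b \<ge> 2" using assms by auto
  then have "a * b \<ge> 2 * 2" by (intro mult_mono) auto
  then show False using assms by simp
qed

lemma obtuse: assumes d: "\<delta> \<in> Del" and d': "\<delta>' \<in> Del" and ne: "\<delta> \<noteq> \<delta>'" shows "B \<delta> \<delta>' \<le> 0"
proof (rule ccontr)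
  assume "\<not> ?thesis"
  then have pB: "B \<delta> \<delta>' > 0" by simp
  have dR: "\<delta> \<in> R" "\<delta>' \<in> R" using d d' DelR by auto
  have nz: "\<delta> \<noteq> 0" "\<delta>' \<noteq> 0" using dR zR by auto
  have np: "\<delta>' \<noteq> t *\<^sub>R \<delta>" for t
  proof
    assume e: "\<delta>' = t *\<^sub>R \<delta>"
    then have "t = 1 \<or> t = -1" using red[OF dR(1)] dR(2) by auto
    moreover have "t \<noteq> 1" using e ne by auto
    moreover have "t \<noteq> -1"
    proof
      assume "t = -1"
      then have "\<phi> \<delta>' = - \<phi> \<delta>" using e phi_neg by simp
      then show False using d d' unfolding Del_def Pos_def by auto
    qed
    ultimately show False by auto
  qed
  have CS: "(B \<delta> \<delta>')^2 < B \<delta> \<delta> * B \<delta>' \<delta>'" by (rule B_CS[OF nz(1) np])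
  have p1: "B \<delta> \<delta> > 0" "B \<delta>' \<delta>' > 0" using B_pos nz by auto
  have e1: "B \<delta> \<delta> * cor \<delta> \<delta>' = 2 * B \<delta> \<delta>'" using cor_B[OF dR(1)] .
  have e2: "B \<delta>' \<delta>' * cor \<delta>' \<delta> = 2 * B \<delta> \<delta>'" using cor_B[OF dR(2)] B_sym by metis
  obtain a where a: "cor \<delta> \<delta>' = of_int a" using cor(4)[OF dR(1) dR(2)] Ints_cases by metis
  obtain b where b: "cor \<delta>' \<delta> = of_int b" using cor(4)[OF dR(2) dR(1)] Ints_cases by metis
  have "B \<delta> \<delta> * of_int a > 0" using e1 a pB by simp
  then have "(of_int a::real) > 0" using p1(1) zero_less_mult_pos by blast
  then have ap: "a > 0" by simp
  have "B \<delta>' \<delta>' * of_int b > 0" using e2 b pB by simp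
  then have "(of_int b::real) > 0" using p1(2) zero_less_mult_pos by blast
  then have bp: "b > 0" by simp
  have "(B \<delta> \<delta> * cor \<delta> \<delta>') * (B \<delta>' \<delta>' * cor \<delta>' \<delta>) = (2 * B \<delta> \<delta>') * (2 * B \<delta> \<delta>')"
    using e1 e2 by simp
  then have "(B \<delta> \<delta> * B \<delta>' \<delta>') * (of_int (a * b)) = 4 * (B \<delta> \<delta>')^2"
    using a b by (simp add: power2_eq_square algebra_simps)
  also have "\<dots> < (B \<delta> \<delta> * B \<delta>' \<delta>') * 4" using CS by simp
  finally have "of_int (a * b) < (4::real)" using p1 by (simp add: mult_less_cancel_left_pos)
  then have "a * b < 4" by linarith
  then have "a = 1 \<or> b = 1" using int_prod ap bp by blast
  then show False
  proof
    assume "a = 1"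
    then have "refl \<delta> \<delta>' = \<delta>' - \<delta>" unfolding refl_def using a by simp
    then have "\<delta>' - \<delta> \<in> R" using refl_R[OF dR] by simp
    then show False using diff_not_root[OF d d'] by blast
  next
    assume "b = 1"
    then have "refl \<delta>' \<delta> = \<delta> - \<delta>'" unfolding refl_def using b by simp
    then have "\<delta> - \<delta>' \<in> R" using refl_R[OF dR(2) dR(1)] by simp
    then show False using diff_not_root[OF d' d] by blast
  qed
qed

lemma indep: "independent Del"
proof
  assume "dependent Del"
  then obtain u where u: "\<exists>v\<in>Del. u v \<noteq> 0" "(\<Sum>v\<in>Del. u v *\<^sub>R v) = 0"
    using dependent_finite[OF finDel] by auto
  define P where "P = {\<delta>\<in>Del. u \<delta> > 0}"
  define N where "N = {\<delta>\<in>Del. u \<delta> < 0}"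
  have fP: "finite P" "finite N" using finDel unfolding P_def N_def by auto
  have split: "(\<Sum>v\<in>Del. u v *\<^sub>R v) = (\<Sum>v\<in>P. u v *\<^sub>R v) + (\<Sum>v\<in>N. u v *\<^sub>R v)"
  proof -
    have "(\<Sum>v\<in>Del. u v *\<^sub>R v) = (\<Sum>v\<in>Del. (if u v > 0 then u v *\<^sub>R v else 0) + (if u v < 0 then u v *\<^sub>R v else 0))"
      by (intro sum.cong) auto
    also have "\<dots> = (\<Sum>v\<in>P. u v *\<^sub>R v) + (\<Sum>v\<in>N. u v *\<^sub>R v)"
      unfolding sum.distrib P_def N_def
      using sum.inter_filter[OF finDel, of "\<lambda>v. u v *\<^sub>R v" "\<lambda>v. 0 < u v"]
        sum.inter_filter[OF finDel, of "\<lambda>v. u v *\<^sub>R v" "\<lambda>v. u v < 0"] by simp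
    finally show ?thesis .
  qed
  define v where "v = (\<Sum>\<delta>\<in>P. u \<delta> *\<^sub>R \<delta>)"
  have h: "v + (\<Sum>\<delta>\<in>N. u \<delta> *\<^sub>R \<delta>) = 0" using u(2) split unfolding v_def by simp
  have "v = - (\<Sum>\<delta>\<in>N. u \<delta> *\<^sub>R \<delta>)" using h by (simp add: eq_neg_iff_add_eq_0)
  then have v2: "v = (\<Sum>\<delta>\<in>N. (- u \<delta>) *\<^sub>R \<delta>)" by (simp add: sum_negf)
  have Bv: "B \<delta> v = (\<Sum>\<delta>'\<in>N. (- u \<delta>') * B \<delta> \<delta>')" for \<delta>
    by (subst v2) (rule B_sum2[OF fP(2), where a="\<lambda>\<delta>'. - u \<delta>'" and f="\<lambda>x. x"])
  have "B v v = (\<Sum>\<delta>\<in>P. u \<delta> * B \<delta> v)" by (subst (1) v_def) (rule B_sum[OF fP(1), of u "\<lambda>x. x"])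
  also have "\<dots> = (\<Sum>\<delta>\<in>P. u \<delta> * (\<Sum>\<delta>'\<in>N. (- u \<delta>') * B \<delta> \<delta>'))"
    by (simp only: Bv)
  also have "\<dots> \<le> 0"
  proof (rule sum_nonpos)
    fix \<delta> assume dP: "\<delta> \<in> P"
    have "(\<Sum>\<delta>'\<in>N. (- u \<delta>') * B \<delta> \<delta>') \<le> 0"
    proof (rule sum_nonpos)
      fix \<delta>' assume "\<delta>' \<in> N"
      then have "\<delta> \<in> Del" "\<delta>' \<in> Del" "\<delta> \<noteq> \<delta>'" "- u \<delta>' \<ge> 0" using dP unfolding P_def N_def by auto
      then show "(- u \<delta>') * B \<delta> \<delta>' \<le> 0" using obtuse mult_nonneg_nonpos by blast
    qed
    moreover have "u \<delta> \<ge> 0" using dP unfolding P_def by auto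
    ultimately show "u \<delta> * (\<Sum>\<delta>'\<in>N. (- u \<delta>') * B \<delta> \<delta>') \<le> 0" by (simp add: mult_nonneg_nonpos)
  qed
  finally have "v = 0" using B_pos[of v] by (cases "v = 0") auto
  have phP: "\<phi> v = (\<Sum>\<delta>\<in>P. u \<delta> * \<phi> \<delta>)" unfolding v_def linear_sum[OF phi_lin] by (simp add: linear_scale[OF phi_lin])
  have phN: "\<phi> v = (\<Sum>\<delta>\<in>N. (- u \<delta>) * \<phi> \<delta>)" unfolding v2 linear_sum[OF phi_lin] by (simp add: linear_scale[OF phi_lin] phi_neg)
  have "P = {}"
  proof (rule ccontr)
    assume "P \<noteq> {}"
    then have "(\<Sum>\<delta>\<in>P. u \<delta> * \<phi> \<delta>) > 0" using fP(1)
      by (intro sum_pos) (auto simp: P_def Del_def Pos_def)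
    then show False using phP \<open>v = 0\<close> linear_0[OF phi_lin] by simp
  qed
  moreover have "N = {}"
  proof (rule ccontr)
    assume "N \<noteq> {}"
    then have "(\<Sum>\<delta>\<in>N. (- u \<delta>) * \<phi> \<delta>) > 0" using fP(2)
      by (intro sum_pos) (auto simp: N_def Del_def Pos_def mult_neg_pos)
    then show False using phN \<open>v = 0\<close> linear_0[OF phi_lin] by simp
  qed
  ultimately show False using u(1) unfolding P_def N_def by (metis (mono_tags) empty_Collect_eq linorder_neqE_linordered_idom)
qed

lemma base: "is_base R Del"
  unfolding is_base_def
proof (intro conjI DelR indep ballI)
  fix \<beta> assume b: "\<beta> \<in> R"
  show "\<exists>c::'a\<Rightarrow>int. \<beta> = (\<Sum>\<delta>\<in>Del. of_int (c \<delta>) *\<^sub>R \<delta>) \<and> ((\<forall>\<delta>\<in>Del. c \<delta> \<ge> 0) \<or> (\<forall>\<delta>\<in>Del. c \<delta> \<le> 0))"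
  proof (cases "\<beta> \<in> Pos")
    case True
    then show ?thesis using pos_comb by blast
  next
    case False
    then have "- \<beta> \<in> Pos" using R_split b by auto
    then obtain k where k: "\<forall>\<delta>\<in>Del. k \<delta> \<ge> 0" "- \<beta> = (\<Sum>\<delta>\<in>Del. of_int (k \<delta>) *\<^sub>R \<delta>)"
      using pos_comb by blast
    have "\<beta> = (\<Sum>\<delta>\<in>Del. of_int (- k \<delta>) *\<^sub>R \<delta>)"
      using k(2) by (metis (no_types, lifting) minus_minus sum_negf scaleR_minus_left of_int_minus sum.cong)
    then show ?thesis using k(1) by (intro exI[of _ "\<lambda>\<delta>. - k \<delta>"]) auto
  qed
qed

lemma Del_inv: assumes "linear \<tau>" "\<tau> ` R = R" "inj \<tau>" "\<And>\<alpha>. \<alpha> \<in> R \<Longrightarrow> \<phi> (\<tau> \<alpha>) = \<phi> \<alpha>"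
  shows "\<tau> ` Del = Del"
proof -
  have "\<tau> \<alpha> \<in> Del" if a: "\<alpha> \<in> Del" for \<alpha>
  proof -
    have aR: "\<alpha> \<in> R" using a DelR by auto
    have "\<tau> \<alpha> \<in> R" using aR assms(2) by auto
    then have tP: "\<tau> \<alpha> \<in> Pos" using a assms(4)[OF aR] unfolding Del_def Pos_def by auto
    have "\<not> Dec (\<tau> \<alpha>)"
    proof
      assume "Dec (\<tau> \<alpha>)"
      then obtain \<beta> \<gamma> where bg: "\<beta> \<in> Pos" "\<gamma> \<in> Pos" "\<tau> \<alpha> = \<beta> + \<gamma>" unfolding Dec_def by auto
      obtain \<beta>' where b': "\<beta>' \<in> R" "\<beta> = \<tau> \<beta>'" using bg(1) assms(2) unfolding Pos_def by (metis (no_types, lifting) imageE mem_Collect_eq)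
      obtain \<gamma>' where g': "\<gamma>' \<in> R" "\<gamma> = \<tau> \<gamma>'" using bg(2) assms(2) unfolding Pos_def by (metis (no_types, lifting) imageE mem_Collect_eq)
      have "\<beta>' \<in> Pos" "\<gamma>' \<in> Pos" using b' g' bg assms(4) unfolding Pos_def by auto
      moreover have "\<alpha> = \<beta>' + \<gamma>'" using bg(3) b' g' linear_add[OF assms(1)] assms(3) by (metis injD)
      ultimately have "Dec \<alpha>" unfolding Dec_def by auto
      then show False using a unfolding Del_def by auto
    qed
    then show ?thesis using tP unfolding Del_def by auto
  qed
  then have "\<tau> ` Del \<subseteq> Del" by auto
  then show ?thesis using endo_inj_surj[OF finDel _ inj_on_subset[OF assms(3)]] by auto
qed

end

lemma indep_list: assumes "independent (set bs)" "distinct bs"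
  "(\<Sum>j<length bs. x j *\<^sub>R bs!j) = 0" "j < length bs"
  shows "x j = 0"
proof -
  let ?n = "length bs"
  have bij: "bij_betw ((!) bs) {..<?n} (set bs)" using bij_betw_nth[OF assms(2)] by simp
  define u where "u = x \<circ> the_inv_into {..<?n} ((!) bs)"
  have inv: "the_inv_into {..<?n} ((!) bs) (bs!i) = i" if "i < ?n" for i
    using the_inv_into_f_f[OF bij_betw_imp_inj_on[OF bij]] that by auto
  have "(\<Sum>\<beta>\<in>set bs. u \<beta> *\<^sub>R \<beta>) = (\<Sum>i<?n. u (bs!i) *\<^sub>R bs!i)"
    using sum.reindex_bij_betw[OF bij, of "\<lambda>\<beta>. u \<beta> *\<^sub>R \<beta>"] by simp
  also have "\<dots> = (\<Sum>i<?n. x i *\<^sub>R bs!i)" unfolding u_def by (intro sum.cong) (auto simp: inv)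
  finally have "(\<Sum>\<beta>\<in>set bs. u \<beta> *\<^sub>R \<beta>) = 0" using assms(3) by simp
  then have "\<forall>v\<in>set bs. u v = 0" using assms(1) dependent_finite[of "set bs"] by auto
  then have "u (bs!j) = 0" using assms(4) by simp
  then show ?thesis unfolding u_def using inv[OF assms(4)] by simp
qed

lemma of_int_floor_Ints: "(z::'b::floor_ceiling) \<in> \<int> \<Longrightarrow> of_int \<lfloor>z\<rfloor> = z"
  by (metis Ints_cases floor_of_int)

context rootsys begin

lemma cor_sum: assumes "\<beta> \<in> R" shows "cor \<beta> (\<Sum>j<n. x j *\<^sub>R v j) = (\<Sum>j<n. x j * cor \<beta> (v j))"
  by (simp add: linear_sum[OF cor(1)[OF assms]] linear_scale[OF cor(1)[OF assms]])

lemma rat_coords: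
  assumes bs: "set bs \<subseteq> R" "distinct bs" "independent (set bs)" "span (set bs) = UNIV" and a: "\<alpha> \<in> R"
  shows "\<exists>r :: nat \<Rightarrow> rat. \<alpha> = (\<Sum>j<length bs. of_rat (r j) *\<^sub>R bs!j)"
proof -
  let ?n = "length bs"
  have bsR: "bs!i \<in> R" if "i < ?n" for i using bs(1) that by auto
  define M :: "rat mat" where "M = mat ?n ?n (\<lambda>(i,j). of_int \<lfloor>cor (bs!i) (bs!j)\<rfloor>)"
  have Mc: "M \<in> carrier_mat ?n ?n" unfolding M_def by auto
  have Mij: "real_of_rat (M $$ (i,j)) = cor (bs!i) (bs!j)" if "i < ?n" "j < ?n" for i j
    unfolding M_def using that of_int_floor_Ints[OF cor(4)[OF bsR bsR]] by simp
  have Mv: "real_of_rat ((M *\<^sub>v v) $ i) = (\<Sum>j<?n. real_of_rat (v $ j) * cor (bs!i) (bs!j))"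
    if "i < ?n" "v \<in> carrier_vec ?n" for i v
  proof -
    have "(M *\<^sub>v v) $ i = (\<Sum>j = 0..<?n. M $$ (i,j) * v $ j)"
      using that Mc by (simp add: index_mult_mat_vec scalar_prod_def row_def)
    then show ?thesis using Mij that by (simp add: of_rat_sum of_rat_mult lessThan_atLeast0 mult.commute)
  qed
  have K0: "x j = 0" if h: "\<And>i. i < ?n \<Longrightarrow> (\<Sum>j<?n. x j * cor (bs!i) (bs!j)) = 0" "j < ?n" for x j
  proof -
    define w where "w = (\<Sum>j<?n. x j *\<^sub>R bs!j)"
    have "cor \<beta> w = 0" if "\<beta> \<in> set bs" for \<beta>
    proof -
      obtain i where i: "i < ?n" "\<beta> = bs!i" using \<open>\<beta> \<in> set bs\<close> by (metis in_set_conv_nth)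
      show ?thesis unfolding w_def i(2) cor_sum[OF bsR[OF i(1)]] using h(1)[OF i(1)] .
    qed
    then have "w = 0" using B_span0[OF bs(1) bs(4)] by blast
    then show ?thesis using indep_list[OF bs(3) bs(2) _ h(2)] unfolding w_def by blast
  qed
  have "Determinant.det M \<noteq> 0"
  proof
    assume "Determinant.det M = 0"
    then obtain v where v: "v \<in> carrier_vec ?n" "v \<noteq> 0\<^sub>v ?n" "M *\<^sub>v v = 0\<^sub>v ?n"
      using det_0_iff_vec_prod_zero_field[OF Mc] by auto
    have "real_of_rat (v $ j) = 0" if "j < ?n" for j
    proof (rule K0[OF _ that])
      fix i assume i: "i < ?n"
      have "real_of_rat ((M *\<^sub>v v) $ i) = 0" using v(3) i by simp
      then show "(\<Sum>j<?n. real_of_rat (v $ j) * cor (bs!i) (bs!j)) = 0" using Mv[OF i v(1)] by simp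
    qed
    then have "v = 0\<^sub>v ?n" using v(1) by (intro eq_vecI) auto
    then show False using v(2) by simp
  qed
  then have "M \<in> Units (ring_mat TYPE(rat) ?n ())" by (rule det_non_zero_imp_unit[OF Mc])
  then obtain Mi where Mi: "Mi \<in> carrier_mat ?n ?n" "M * Mi = 1\<^sub>m ?n"
    unfolding Units_def ring_mat_def by auto
  define y :: "rat vec" where "y = vec ?n (\<lambda>i. of_int \<lfloor>cor (bs!i) \<alpha>\<rfloor>)"
  have yc: "y \<in> carrier_vec ?n" unfolding y_def by auto
  define r where "r = Mi *\<^sub>v y"
  have rc: "r \<in> carrier_vec ?n" unfolding r_def using Mi yc by auto
  have Mr: "M *\<^sub>v r = y" unfolding r_def using assoc_mult_mat_vec[OF Mc Mi(1) yc, symmetric] Mi(2) yc by simp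
  define u where "u = (\<Sum>j<?n. of_rat (r $ j) *\<^sub>R bs!j)"
  have "cor \<beta> (u - \<alpha>) = 0" if "\<beta> \<in> set bs" for \<beta>
  proof -
    obtain i where i: "i < ?n" "\<beta> = bs!i" using \<open>\<beta> \<in> set bs\<close> by (metis in_set_conv_nth)
    have "cor \<beta> u = real_of_rat ((M *\<^sub>v r) $ i)" unfolding u_def i(2) cor_sum[OF bsR[OF i(1)]] Mv[OF i(1) rc] ..
    also have "\<dots> = cor \<beta> \<alpha>" unfolding Mr y_def i(2) using i(1) of_int_floor_Ints[OF cor(4)[OF bsR[OF i(1)] a]] by simp
    finally show ?thesis using linear_diff[OF cor(1)] that bs(1) by auto
  qed
  then have "u - \<alpha> = 0" using B_span0[OF bs(1) bs(4)] by blast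
  then show ?thesis unfolding u_def by (intro exI[of _ "\<lambda>j. r $ j"]) simp
qed

end

lemma common_denom: "finite S \<Longrightarrow> \<exists>N::int. N > 0 \<and> (\<forall>x\<in>S. of_int N * (q x :: rat) \<in> \<int>)"
proof (induction S rule: finite_induct)
  case empty then show ?case by (intro exI[of _ 1]) auto
next
  case (insert x S)
  then obtain N where N: "N > 0" "\<forall>y\<in>S. of_int N * q y \<in> \<int>" by auto
  obtain a d where ad: "quotient_of (q x) = (a, d)" by (cases "quotient_of (q x)")
  have d: "d > 0" using quotient_of_denom_pos[OF ad] .
  have qx: "q x = of_int a / of_int d" using quotient_of_div[OF ad] .
  have "of_int (N * d) * q x = of_int (N * a)" using d unfolding qx by simp
  then have 1: "of_int (N * d) * q x \<in> \<int>" by (metis Ints_of_int)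
  have 2: "of_int (N * d) * q y \<in> \<int>" if "y \<in> S" for y
  proof -
    have "of_int (N * d) * q y = of_int d * (of_int N * q y)" by simp
    then show ?thesis using N(2) that by (metis Ints_mult Ints_of_int)
  qed
  show ?case using 1 2 N(1) d by (intro exI[of _ "N * d"]) auto
qed

context rootsys begin

abbreviation "X \<equiv> root_lattice R"

lemma lat_I: "x = (\<Sum>\<beta>\<in>R. of_int (c \<beta>) *\<^sub>R \<beta>) \<Longrightarrow> x \<in> X"
  unfolding root_lattice_def by auto

lemma lat_R: assumes "\<alpha> \<in> R" shows "\<alpha> \<in> X"
proof -
  have "(\<Sum>\<beta>\<in>R. of_int (if \<beta> = \<alpha> then 1 else 0) *\<^sub>R \<beta>) = (\<Sum>\<beta>\<in>R. if \<beta> = \<alpha> then \<beta> else 0)"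
    by (intro sum.cong) auto
  also have "\<dots> = \<alpha>" using assms finR by simp
  finally show ?thesis by (intro lat_I[of _ "\<lambda>\<beta>. if \<beta> = \<alpha> then 1 else 0"]) simp
qed

lemma lat_add: assumes "x \<in> X" "y \<in> X" shows "x + y \<in> X"
proof -
  obtain c d where "x = (\<Sum>\<beta>\<in>R. of_int (c \<beta>) *\<^sub>R \<beta>)" "y = (\<Sum>\<beta>\<in>R. of_int (d \<beta>) *\<^sub>R \<beta>)"
    using assms unfolding root_lattice_def by auto
  then have "x + y = (\<Sum>\<beta>\<in>R. of_int (c \<beta> + d \<beta>) *\<^sub>R \<beta>)" by (simp add: sum.distrib scaleR_add_left)
  then show ?thesis by (rule lat_I)
qed

lemma lat_scale: assumes "x \<in> X" shows "of_int k *\<^sub>R x \<in> X"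
proof -
  obtain c where "x = (\<Sum>\<beta>\<in>R. of_int (c \<beta>) *\<^sub>R \<beta>)" using assms unfolding root_lattice_def by auto
  then have "of_int k *\<^sub>R x = (\<Sum>\<beta>\<in>R. of_int (k * c \<beta>) *\<^sub>R \<beta>)" by (simp add: scaleR_sum_right)
  then show ?thesis by (rule lat_I)
qed

lemma lat_0: "0 \<in> X" by (rule lat_I[of _ "\<lambda>_. 0"]) simp

lemma lat_neg: "x \<in> X \<Longrightarrow> - x \<in> X" using lat_scale[of x "-1"] by simp

lemma lat_sum: "finite S \<Longrightarrow> (\<And>i. i \<in> S \<Longrightarrow> g i \<in> X) \<Longrightarrow> sum g S \<in> X"
  by (induction S rule: finite_induct) (auto intro: lat_add lat_0)

lemma lat_image: assumes "linear \<tau>" "\<tau> ` R \<subseteq> R" "x \<in> X" shows "\<tau> x \<in> X"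
proof -
  obtain c where c: "x = (\<Sum>\<beta>\<in>R. of_int (c \<beta>) *\<^sub>R \<beta>)" using assms unfolding root_lattice_def by auto
  have "\<tau> x = (\<Sum>\<beta>\<in>R. of_int (c \<beta>) *\<^sub>R \<tau> \<beta>)" unfolding c linear_sum[OF assms(1)] by (simp add: linear_scale[OF assms(1)])
  also have "\<dots> \<in> X" using finR assms(2) by (intro lat_sum lat_scale lat_R) auto
  finally show ?thesis .
qed

context fixes f assumes f: "f \<in> dual_lattice R"
begin

lemma f_add: "x \<in> X \<Longrightarrow> y \<in> X \<Longrightarrow> f (x + y) = f x + f y" using f unfolding dual_lattice_def by auto

lemma f_0: "f 0 = 0" using f_add[OF lat_0 lat_0] by simp

lemma f_neg: assumes "x \<in> X" shows "f (- x) = - f x"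
proof -
  have "f (x + - x) = f x + f (- x)" using f_add[OF assms lat_neg[OF assms]] .
  then show ?thesis using f_0 by simp
qed

lemma f_nat: "x \<in> X \<Longrightarrow> f (of_nat n *\<^sub>R x) = of_nat n * f x"
proof (induction n)
  case 0 then show ?case using f_0 by simp
next
  case (Suc n)
  have "of_nat (Suc n) *\<^sub>R x = x + of_nat n *\<^sub>R x" by (simp add: algebra_simps)
  moreover have "of_nat n *\<^sub>R x \<in> X" using lat_scale[OF Suc.prems, of "int n"] by simp
  ultimately show ?case using f_add[OF Suc.prems \<open>of_nat n *\<^sub>R x \<in> X\<close>] Suc.IH[OF Suc.prems] by (simp add: algebra_simps)
qed

lemma f_scale: assumes "x \<in> X" shows "f (of_int k *\<^sub>R x) = k * f x"
proof (cases "k \<ge> 0")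
  case True
  then obtain n where "k = int n" by (metis nonneg_int_cases)
  then show ?thesis using f_nat[OF assms, of n] by simp
next
  case False
  then obtain n where n: "k = - int n" by (metis nonpos_int_cases linear)
  have "of_int k *\<^sub>R x = - (of_nat n *\<^sub>R x)" unfolding n by simp
  moreover have "of_nat n *\<^sub>R x \<in> X" using lat_scale[OF assms, of "int n"] by simp
  ultimately show ?thesis using f_neg f_nat[OF assms, of n] n by simp
qed

lemma f_sum: "finite S \<Longrightarrow> (\<And>i. i \<in> S \<Longrightarrow> g i \<in> X) \<Longrightarrow> f (sum g S) = (\<Sum>i\<in>S. f (g i))"
proof (induction S rule: finite_induct)
  case empty then show ?case using f_0 by simp
next
  case (insert i S)
  then show ?case using f_add[of "g i" "sum g S"] lat_sum[of S g] by simp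
qed

lemma f_ext: "\<exists>\<phi>::'a \<Rightarrow> real. linear \<phi> \<and> (\<forall>\<alpha>\<in>R. \<phi> \<alpha> = of_int (f \<alpha>))"
proof -
  obtain b where b: "b \<subseteq> R" "independent b" "R \<subseteq> span b" using maximal_independent_subset[of R] by blast
  have "span R \<subseteq> span b" using span_mono[OF b(3)] by (simp add: span_span)
  then have spb: "span b = UNIV" using spR by auto
  have "finite b" using b(1) finR finite_subset by auto
  then obtain bs where bs: "set bs = b" "distinct bs" using finite_distinct_list by blast
  let ?n = "length bs"
  obtain \<phi> :: "'a \<Rightarrow> real" where \<phi>: "linear \<phi>" "\<forall>x\<in>b. \<phi> x = of_int (f x)"
    using linear_independent_extend[OF b(2), of "\<lambda>x. of_int (f x)"] by auto
  have bsR: "bs!j \<in> R" if "j < ?n" for j using bs(1) b(1) that nth_mem by blast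
  have "\<phi> \<alpha> = of_int (f \<alpha>)" if a: "\<alpha> \<in> R" for \<alpha>
  proof -
    obtain r where r: "\<alpha> = (\<Sum>j<?n. of_rat (r j) *\<^sub>R bs!j)"
      using rat_coords[of bs \<alpha>] bs b(1,2) spb a by auto
    obtain N where N: "N > 0" "\<forall>j\<in>{..<?n}. of_int N * r j \<in> \<int>" using common_denom[of "{..<?n}" r] by auto
    define k where "k j = \<lfloor>of_int N * r j\<rfloor>" for j
    have k: "real_of_int (k j) = of_int N * of_rat (r j)" if "j < ?n" for j
    proof -
      have "of_int (k j) = of_int N * r j" unfolding k_def using of_int_floor_Ints N(2) that by auto
      then have "of_rat (of_int (k j)) = of_rat (of_int N * r j)" by simp
      then show ?thesis by (simp add: of_rat_mult)
    qed
    have "of_int N *\<^sub>R \<alpha> = (\<Sum>j<?n. of_int (k j) *\<^sub>R bs!j)" unfolding r scaleR_sum_right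
      by (intro sum.cong) (auto simp: k)
    then have s0: "f (of_int N *\<^sub>R \<alpha>) = f (\<Sum>j<?n. of_int (k j) *\<^sub>R bs!j)" by simp
    have s1: "f (of_int N *\<^sub>R \<alpha>) = N * f \<alpha>" by (rule f_scale[OF lat_R[OF a]])
    have s2: "f (\<Sum>j<?n. of_int (k j) *\<^sub>R bs!j) = (\<Sum>j<?n. f (of_int (k j) *\<^sub>R bs!j))"
      by (rule f_sum) (auto intro: lat_scale lat_R bsR)
    have s3: "(\<Sum>j<?n. f (of_int (k j) *\<^sub>R bs!j)) = (\<Sum>j<?n. k j * f (bs!j))"
      by (intro sum.cong refl f_scale lat_R bsR) simp
    have "N * f \<alpha> = (\<Sum>j<?n. k j * f (bs!j))" using s0 s1 s2 s3 by simp
    then have "real_of_int (N * f \<alpha>) = real_of_int (\<Sum>j<?n. k j * f (bs!j))" by simp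
    then have e: "of_int N * real_of_int (f \<alpha>) = (\<Sum>j<?n. real_of_int (k j) * of_int (f (bs!j)))"
      by simp
    have "\<phi> \<alpha> = (\<Sum>j<?n. of_rat (r j) * \<phi> (bs!j))"
      unfolding r linear_sum[OF \<phi>(1)] by (simp add: linear_scale[OF \<phi>(1)])
    also have "\<dots> = (\<Sum>j<?n. of_rat (r j) * of_int (f (bs!j)))"
      using \<phi>(2) bs(1) by (intro sum.cong) auto
    finally have calc: "\<phi> \<alpha> = (\<Sum>j<?n. of_rat (r j) * of_int (f (bs!j)))" .
    have "of_int N * \<phi> \<alpha> = (\<Sum>j<?n. (of_int N * of_rat (r j)) * real_of_int (f (bs!j)))"
      unfolding calc sum_distrib_left by (simp add: mult.assoc)
    also have "\<dots> = (\<Sum>j<?n. real_of_int (k j) * of_int (f (bs!j)))"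
      by (intro sum.cong) (auto simp: k)
    finally have "of_int N * \<phi> \<alpha> = (\<Sum>j<?n. real_of_int (k j) * of_int (f (bs!j)))" .
    then have "of_int N * \<phi> \<alpha> = of_int N * real_of_int (f \<alpha>)" using e by simp
    then show ?thesis using N(1) by simp
  qed
  then show ?thesis using \<phi>(1) by blast
qed

end

end

context rootsys begin

abbreviation "FL \<sigma> \<equiv> fixed_dual_lattice R \<sigma>"

lemma FL_lin: "f \<in> FL \<sigma> \<Longrightarrow> g \<in> FL \<sigma> \<Longrightarrow> (\<lambda>x. f x + t * g x) \<in> FL \<sigma>"
  unfolding fixed_dual_lattice_def dual_lattice_def by (auto simp: algebra_simps)

lemma FL_0: "(\<lambda>x. 0) \<in> FL \<sigma>"
  unfolding fixed_dual_lattice_def dual_lattice_def by auto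

lemma reg_aux:
  assumes all: "\<forall>\<alpha>\<in>R. \<exists>f\<in>FL \<sigma>. f \<alpha> \<noteq> 0"
  shows "finite S \<Longrightarrow> S \<subseteq> R \<Longrightarrow> \<exists>g\<in>FL \<sigma>. \<forall>\<alpha>\<in>S. g \<alpha> \<noteq> 0"
proof (induction S rule: finite_induct)
  case empty then show ?case using FL_0 by blast
next
  case (insert \<beta> S)
  then obtain g where g: "g \<in> FL \<sigma>" "\<forall>\<alpha>\<in>S. g \<alpha> \<noteq> 0" by auto
  show ?case
  proof (cases "g \<beta> = 0")
    case False then show ?thesis using g by auto
  next
    case True
    obtain h where h: "h \<in> FL \<sigma>" "h \<beta> \<noteq> 0" using all insert.prems by auto
    define A where "A \<alpha> = {t::int. g \<alpha> + t * h \<alpha> = 0}" for \<alpha>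
    define T where "T = insert 0 (\<Union>\<alpha>\<in>S. A \<alpha>)"
    have finA: "finite (A \<alpha>)" if "\<alpha> \<in> S" for \<alpha>
    proof (cases "h \<alpha> = 0")
      case True
      then have "A \<alpha> = {}" using g(2) that unfolding A_def by simp
      then show ?thesis by simp
    next
      case False
      have "A \<alpha> \<subseteq> {(- g \<alpha>) div h \<alpha>}"
      proof
        fix t assume "t \<in> A \<alpha>"
        then have "- g \<alpha> = t * h \<alpha>" unfolding A_def by simp
        then have "t = (- g \<alpha>) div h \<alpha>" using False by simp
        then show "t \<in> {(- g \<alpha>) div h \<alpha>}" by simp
      qed
      then show ?thesis by (rule finite_subset) simp
    qed
    have "finite (\<Union>\<alpha>\<in>S. A \<alpha>)" by (rule finite_UN_I[OF insert.hyps(1) finA])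
    then have "finite T" unfolding T_def by simp
    then have "\<exists>t. t \<notin> T" by (rule ex_new_if_finite[OF infinite_UNIV_int])
    then obtain t where t: "t \<notin> T" by (elim exE)
    have t0: "t \<noteq> 0" using t unfolding T_def by blast
    have tS: "g \<alpha> + t * h \<alpha> \<noteq> 0" if "\<alpha> \<in> S" for \<alpha>
      using t that unfolding T_def A_def by blast
    have "(\<lambda>x. g x + t * h x) \<in> FL \<sigma>" using FL_lin[OF g(1) h(1)] .
    moreover have "\<forall>\<alpha>\<in>insert \<beta> S. g \<alpha> + t * h \<alpha> \<noteq> 0"
    proof
      fix \<alpha> assume "\<alpha> \<in> insert \<beta> S"
      then show "g \<alpha> + t * h \<alpha> \<noteq> 0"
      proof
        assume "\<alpha> = \<beta>"
        have "t * h \<beta> \<noteq> 0" using t0 h(2) by simp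
        then show ?thesis using True \<open>\<alpha> = \<beta>\<close> by simp
      qed (rule tS)
    qed
    ultimately show ?thesis by (intro bexI[where x="\<lambda>x. g x + t * h x"]) auto
  qed
qed

lemma inv_facts: assumes "root_aut R \<sigma>"
  shows "linear ((inv_into UNIV \<sigma>))" "(inv_into UNIV \<sigma>) ` R = R" "\<And>x. (inv_into UNIV \<sigma>) (\<sigma> x) = x" "inj \<sigma>"
proof -
  have l: "linear \<sigma>" and b: "bij \<sigma>" and s: "\<sigma> ` R = R" using assms unfolding root_aut_def by auto
  show "inj \<sigma>" using b bij_is_inj by auto
  then show "linear ((inv_into UNIV \<sigma>))" using inj_linear_imp_inv_linear l by blast
  show "(inv_into UNIV \<sigma>) ` R = R" using image_inv_f_f[OF \<open>inj \<sigma>\<close>, of R] s by simp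
  show "\<And>x. (inv_into UNIV \<sigma>) (\<sigma> x) = x" using \<open>inj \<sigma>\<close> by (simp add: inv_f_f)
qed

lemma base_imp: assumes aut: "root_aut R \<sigma>" and base: "is_base R \<Delta>" and inv: "\<sigma> ` \<Delta> = \<Delta>"
  shows "\<exists>f\<in>FL \<sigma>. \<forall>\<alpha>\<in>R. f \<alpha> \<noteq> 0"
proof -
  have DR: "\<Delta> \<subseteq> R" and ind: "independent \<Delta>"
    and comb: "\<And>\<beta>. \<beta> \<in> R \<Longrightarrow> \<exists>c::'a\<Rightarrow>int. \<beta> = (\<Sum>\<delta>\<in>\<Delta>. of_int (c \<delta>) *\<^sub>R \<delta>) \<and>
        ((\<forall>\<delta>\<in>\<Delta>. c \<delta> \<ge> 0) \<or> (\<forall>\<delta>\<in>\<Delta>. c \<delta> \<le> 0))"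
    using base unfolding is_base_def by auto
  have finD: "finite \<Delta>" using finite_subset[OF DR finR] .
  obtain \<psi> :: "'a \<Rightarrow> real" where \<psi>: "linear \<psi>" "\<forall>x\<in>\<Delta>. \<psi> x = 1"
    using linear_independent_extend[OF ind, of "\<lambda>_. 1"] by auto
  have "R \<subseteq> span \<Delta>"
  proof
    fix \<beta> assume "\<beta> \<in> R"
    then obtain c where c: "\<beta> = (\<Sum>\<delta>\<in>\<Delta>. of_int (c \<delta>) *\<^sub>R \<delta>)" using comb by blast
    have "of_int (c \<delta>) *\<^sub>R \<delta> \<in> span \<Delta>" if "\<delta> \<in> \<Delta>" for \<delta>
      using that by (intro span_scale span_base)
    then show "\<beta> \<in> span \<Delta>" unfolding c by (rule span_sum)
  qed
  then have "span R \<subseteq> span \<Delta>" using span_mono[of R "span \<Delta>"] by (simp add: span_span)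
  then have spD: "span \<Delta> = UNIV" using spR by auto
  have psiR: "\<psi> \<beta> \<in> \<int> \<and> \<psi> \<beta> \<noteq> 0" if b: "\<beta> \<in> R" for \<beta>
  proof -
    obtain c where c: "\<beta> = (\<Sum>\<delta>\<in>\<Delta>. of_int (c \<delta>) *\<^sub>R \<delta>)" "(\<forall>\<delta>\<in>\<Delta>. c \<delta> \<ge> 0) \<or> (\<forall>\<delta>\<in>\<Delta>. c \<delta> \<le> 0)"
      using comb[OF b] by blast
    have "\<psi> \<beta> = (\<Sum>\<delta>\<in>\<Delta>. of_int (c \<delta>) * \<psi> \<delta>)"
      unfolding c(1) linear_sum[OF \<psi>(1)] by (simp add: linear_scale[OF \<psi>(1)])
    also have "\<dots> = of_int (\<Sum>\<delta>\<in>\<Delta>. c \<delta>)" using \<psi>(2) by simp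
    finally have ps: "\<psi> \<beta> = of_int (\<Sum>\<delta>\<in>\<Delta>. c \<delta>)" .
    have "(\<Sum>\<delta>\<in>\<Delta>. c \<delta>) \<noteq> 0"
    proof
      assume s0: "(\<Sum>\<delta>\<in>\<Delta>. c \<delta>) = 0"
      have "\<forall>\<delta>\<in>\<Delta>. c \<delta> = 0"
      proof (cases "\<forall>\<delta>\<in>\<Delta>. c \<delta> \<ge> 0")
        case True then show ?thesis using sum_nonneg_eq_0_iff[OF finD] s0 by blast
      next
        case False
        then have "\<forall>\<delta>\<in>\<Delta>. - c \<delta> \<ge> 0" using c(2) by auto
        moreover have "(\<Sum>\<delta>\<in>\<Delta>. - c \<delta>) = 0" using s0 by (simp add: sum_negf)
        ultimately show ?thesis using sum_nonneg_eq_0_iff[OF finD, of "\<lambda>\<delta>. - c \<delta>"] by auto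
      qed
      then have "\<beta> = 0" unfolding c(1) by simp
      then show False using b zR by auto
    qed
    then show ?thesis by (simp add: ps del: of_int_sum)
  qed
  have psiX: "\<psi> x \<in> \<int>" if xX: "x \<in> X" for x
  proof -
    obtain c where c: "x = (\<Sum>\<beta>\<in>R. of_int (c \<beta>) *\<^sub>R \<beta>)" using xX unfolding root_lattice_def by auto
    have "\<psi> x = (\<Sum>\<beta>\<in>R. of_int (c \<beta>) * \<psi> \<beta>)"
      unfolding c linear_sum[OF \<psi>(1)] by (simp add: linear_scale[OF \<psi>(1)])
    also have "\<dots> \<in> \<int>" using psiR by (intro Ints_sum Ints_mult) auto
    finally show ?thesis .
  qed
  note iv = inv_facts[OF aut]
  have invX: "(inv_into UNIV \<sigma>) x \<in> X" if "x \<in> X" for x using lat_image[OF iv(1) _ that] iv(2) by auto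
  have invD: "(inv_into UNIV \<sigma>) ` \<Delta> = \<Delta>" using image_inv_f_f[OF iv(4), of \<Delta>] inv by simp
  have psi_inv: "\<psi> ((inv_into UNIV \<sigma>) x) = \<psi> x" for x
  proof -
    have "(\<psi> \<circ> (inv_into UNIV \<sigma>)) x = \<psi> x"
    proof (rule linear_eq_on_span[where B=\<Delta>])
      show "linear (\<psi> \<circ> (inv_into UNIV \<sigma>))" using linear_compose[OF iv(1) \<psi>(1)] .
      show "linear \<psi>" by (rule \<psi>(1))
      show "x \<in> span \<Delta>" using spD by auto
      fix y assume "y \<in> \<Delta>"
      then have "(inv_into UNIV \<sigma>) y \<in> \<Delta>" using invD by auto
      then show "(\<psi> \<circ> (inv_into UNIV \<sigma>)) y = \<psi> y" using \<psi>(2) \<open>y \<in> \<Delta>\<close> by simp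
    qed
    then show ?thesis by simp
  qed
  define f where "f x = (if x \<in> X then \<lfloor>\<psi> x\<rfloor> else 0)" for x
  have fadd: "f (x + y) = f x + f y" if xy: "x \<in> X" "y \<in> X" for x y
  proof -
    obtain m where m: "\<psi> y = of_int m" using psiX[OF xy(2)] by (blast elim: Ints_cases)
    have "\<lfloor>\<psi> (x + y)\<rfloor> = \<lfloor>\<psi> x + of_int m\<rfloor>" using linear_add[OF \<psi>(1), of x y] m by simp
    also have "\<dots> = \<lfloor>\<psi> x\<rfloor> + m" by simp
    also have "\<dots> = \<lfloor>\<psi> x\<rfloor> + \<lfloor>\<psi> y\<rfloor>" using m by simp
    finally show ?thesis unfolding f_def using xy lat_add by simp
  qed
  have fd: "f \<in> dual_lattice R"
    unfolding dual_lattice_def mem_Collect_eq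
  proof (intro conjI ballI allI impI)
    fix x y assume "x \<in> X" "y \<in> X" then show "f (x + y) = f x + f y" by (rule fadd)
  next
    fix x assume "x \<notin> X" then show "f x = 0" unfolding f_def by simp
  qed
  have "f \<in> FL \<sigma>"
    unfolding fixed_dual_lattice_def mem_Collect_eq
  proof (intro conjI ballI fd)
    fix x assume "x \<in> X"
    then show "f ((inv_into UNIV \<sigma>) x) = f x" unfolding f_def using invX psi_inv by simp
  qed
  moreover have "\<forall>\<alpha>\<in>R. f \<alpha> \<noteq> 0"
  proof
    fix \<alpha> assume a: "\<alpha> \<in> R"
    obtain m where m: "\<psi> \<alpha> = of_int m" using psiR[OF a] by (blast elim: Ints_cases)
    have "m \<noteq> 0" using psiR[OF a] m by auto
    then show "f \<alpha> \<noteq> 0" unfolding f_def using lat_R[OF a] m by simp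
  qed
  ultimately show ?thesis by blast
qed

end

theorem mainTheorem2:
  fixes R :: "'a::euclidean_space set" and \<sigma> :: "'a \<Rightarrow> 'a"
  assumes "reduced_root_system R" and "irreducible_root_system R"
    and "root_aut R \<sigma>"
  shows "(\<exists>\<Delta>. is_base R \<Delta> \<and> \<sigma> ` \<Delta> = \<Delta>) \<longleftrightarrow>
         \<not> (\<exists>\<alpha>\<in>R. \<forall>f\<in>fixed_dual_lattice R \<sigma>. f \<alpha> = 0)"
proof -
  have rs: "root_system R" and red: "\<And>\<alpha> t. \<alpha> \<in> R \<Longrightarrow> t *\<^sub>R \<alpha> \<in> R \<Longrightarrow> t = 1 \<or> t = -1"
    using assms(1) unfolding reduced_root_system_def by auto
  interpret rootsys R by (rule rootsys.intro[OF rs])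
  show ?thesis
  proof
    assume "\<exists>\<Delta>. is_base R \<Delta> \<and> \<sigma> ` \<Delta> = \<Delta>"
    then obtain \<Delta> where "is_base R \<Delta>" "\<sigma> ` \<Delta> = \<Delta>" by blast
    then obtain f where "f \<in> fixed_dual_lattice R \<sigma>" "\<forall>\<alpha>\<in>R. f \<alpha> \<noteq> 0" using base_imp[OF assms(3)] by blast
    then show "\<not> (\<exists>\<alpha>\<in>R. \<forall>f\<in>fixed_dual_lattice R \<sigma>. f \<alpha> = 0)" by blast
  next
    assume "\<not> (\<exists>\<alpha>\<in>R. \<forall>f\<in>fixed_dual_lattice R \<sigma>. f \<alpha> = 0)"
    then have all: "\<forall>\<alpha>\<in>R. \<exists>f\<in>fixed_dual_lattice R \<sigma>. f \<alpha> \<noteq> 0" by blast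
    obtain g where g: "g \<in> fixed_dual_lattice R \<sigma>" "\<forall>\<alpha>\<in>R. g \<alpha> \<noteq> 0"
      using reg_aux[OF all finR] by blast
    have gd: "g \<in> dual_lattice R" using g(1) unfolding fixed_dual_lattice_def by auto
    obtain \<phi> :: "'a \<Rightarrow> real" where \<phi>: "linear \<phi>" "\<forall>\<alpha>\<in>R. \<phi> \<alpha> = of_int (g \<alpha>)"
      using f_ext[OF gd] by blast
    interpret P: posys R \<phi>
      by (rule posys.intro[OF rootsys.intro[OF rs] posys_axioms.intro]) (use red \<phi> g(2) in auto)
    note iv = inv_facts[OF assms(3)]
    have l: "linear \<sigma>" and s: "\<sigma> ` R = R" using assms(3) unfolding root_aut_def by auto
    have "\<phi> (\<sigma> \<alpha>) = \<phi> \<alpha>" if a: "\<alpha> \<in> R" for \<alpha>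
    proof -
      have sa: "\<sigma> \<alpha> \<in> R" using a s by auto
      have "g ((inv_into UNIV \<sigma>) (\<sigma> \<alpha>)) = g (\<sigma> \<alpha>)" using g(1) lat_R[OF sa] unfolding fixed_dual_lattice_def by auto
      then have "g \<alpha> = g (\<sigma> \<alpha>)" using iv(3) by simp
      then show ?thesis using \<phi>(2) a sa by simp
    qed
    then have "\<sigma> ` P.Del = P.Del" using P.Del_inv[OF l s iv(4)] by blast
    then show "\<exists>\<Delta>. is_base R \<Delta> \<and> \<sigma> ` \<Delta> = \<Delta>" using P.base by blast
  qed
qed

end
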